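(* $\mathfrak{L}(\mathrm{rtDVA}(1))\subsetneq\mathfrak{L}(\mathrm{1DFAM})$.
   Context: $\mathfrak{L}(A)$ denotes the class of languages recognized by machines of type $A$. A real-time deterministic vector automaton of dimension $1$ ($\mathrm{rtDVA}(1)$) is a 6-tuple $(Q,\Sigma,\delta,q_0,Q_a,v)$ with finite state set $Q$, initial state $q_0$, accept states $Q_a$, initial value $v\in\mathbb{Q}$ (freely chosen), and $\delta:Q\times(\Sigma\cup\{\cent,\$\})\times\{=,\neq\}\to Q\times\mathbb{Q}$. The input $w$ is read as $\cent w\$$ left to right, one symbol per step; in state $q$ reading $\sigma$, with $\omega$ equal to "$=$" iff the current value equals $1$, if $\delta(q,\sigma,\omega)=(q',m)$ the machine goes to $q'$ and multiplies its value by $m$. Acceptance: after processing $\$$, the state is in $Q_a$ and the value equals $1$. A one-way deterministic finite automaton with multiplication (1DFAM) is a 6-tuple $(Q,\Sigma,\delta,q_0,Q_a,\Gamma)$ with $\Gamma$ a finite set of rationals and a rational register initially $1$; $\delta:Q\times(\Sigma\cup\{\cent,\$\})\times\{=,\neq\}\to Q\times\{\downarrow,\rightarrow\}\times\Gamma$; reading $\sigma$ in state $q$ with $\omega$ "$=$" iff the register equals $1$, if $\delta(q,\sigma,\omega)=(q',d,\gamma)$ it goes to $q'$, keeps the head in place ($\downarrow$) or moves it one cell right ($\rightarrow$), and multiplies the register by $\gamma$. The tape holds $\cent w\$$ and the input is accepted iff the machine enters an accept state with register value $1$ after scanning $\$$. *)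

theory Defs
  imports Complex_Main
begin

datatype 'a tsym = Cent | Dollar | Sym 'a

definition tape :: "'a list \<Rightarrow> 'a tsym list" where
  "tape w = Cent # map Sym w @ [Dollar]"

definition tape_alph :: "'a set \<Rightarrow> 'a tsym set" where
  "tape_alph \<Sigma> = Sym ` \<Sigma> \<union> {Cent, Dollar}"

text \<open>The boolean argument
  of the transition function is True iff the current value equals 1
  (the "=" case).\<close>
datatype 'a rtdva1 = RtDVA1
  (dva_Q: "nat set")
  (dva_delta: "nat \<Rightarrow> 'a tsym \<Rightarrow> bool \<Rightarrow> nat \<times> rat")
  (dva_q0: nat)
  (dva_Qa: "nat set")
  (dva_v: rat)

definition rtdva1_wf :: "'a set \<Rightarrow> 'a rtdva1 \<Rightarrow> bool" where
  "rtdva1_wf \<Sigma> M \<longleftrightarrow> finite (dva_Q M) \<and> dva_q0 M \<in> dva_Q M \<and> dva_Qa M \<subseteq> dva_Q M \<and>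
     (\<forall>q\<in>dva_Q M. \<forall>\<sigma>\<in>tape_alph \<Sigma>. \<forall>b. fst (dva_delta M q \<sigma> b) \<in> dva_Q M)"

definition rtdva1_step :: "'a rtdva1 \<Rightarrow> nat \<times> rat \<Rightarrow> 'a tsym \<Rightarrow> nat \<times> rat" where
  "rtdva1_step M c \<sigma> =
     (case dva_delta M (fst c) \<sigma> (snd c = 1) of (q', m) \<Rightarrow> (q', snd c * m))"

definition rtdva1_final :: "'a rtdva1 \<Rightarrow> 'a list \<Rightarrow> nat \<times> rat" where
  "rtdva1_final M w = foldl (rtdva1_step M) (dva_q0 M, dva_v M) (tape w)"

definition rtdva1_accepts :: "'a rtdva1 \<Rightarrow> 'a list \<Rightarrow> bool" where
  "rtdva1_accepts M w \<longleftrightarrow>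
     fst (rtdva1_final M w) \<in> dva_Qa M \<and> snd (rtdva1_final M w) = 1"

definition rtDVA1_langs :: "'a set \<Rightarrow> 'a list set set" where
  "rtDVA1_langs \<Sigma> = {L. \<exists>M. rtdva1_wf \<Sigma> M \<and>
      L = {w. set w \<subseteq> \<Sigma> \<and> rtdva1_accepts M w}}"

datatype move = Stay | Right

datatype 'a dfam = DFAM
  (fam_Q: "nat set")
  (fam_delta: "nat \<Rightarrow> 'a tsym \<Rightarrow> bool \<Rightarrow> nat \<times> move \<times> rat")
  (fam_q0: nat)
  (fam_Qa: "nat set")
  (fam_Gamma: "rat set")

definition dfam_wf :: "'a set \<Rightarrow> 'a dfam \<Rightarrow> bool" where
  "dfam_wf \<Sigma> M \<longleftrightarrow> finite (fam_Q M) \<and> finite (fam_Gamma M) \<and>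
     fam_q0 M \<in> fam_Q M \<and> fam_Qa M \<subseteq> fam_Q M \<and>
     (\<forall>q\<in>fam_Q M. \<forall>\<sigma>\<in>tape_alph \<Sigma>. \<forall>b.
        fst (fam_delta M q \<sigma> b) \<in> fam_Q M \<and> snd (snd (fam_delta M q \<sigma> b)) \<in> fam_Gamma M)"

text \<open>Configurations: (state, head position on the tape, register).
  Once the head has moved past the right end-marker the machine has stopped.\<close>
definition dfam_step :: "'a dfam \<Rightarrow> 'a tsym list \<Rightarrow> nat \<times> nat \<times> rat \<Rightarrow> nat \<times> nat \<times> rat" where
  "dfam_step M t c =
     (case c of (q, i, x) \<Rightarrow>
       if i < length t then
         (case fam_delta M q (t ! i) (x = 1) of (q', d, \<gamma>) \<Rightarrow>
            (q', (if d = Right then Suc i else i), x * \<gamma>))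
       else c)"

definition dfam_conf :: "'a dfam \<Rightarrow> 'a list \<Rightarrow> nat \<Rightarrow> nat \<times> nat \<times> rat" where
  "dfam_conf M w k = (dfam_step M (tape w) ^^ k) (fam_q0 M, 0, 1)"

definition dfam_accepts :: "'a dfam \<Rightarrow> 'a list \<Rightarrow> bool" where
  "dfam_accepts M w \<longleftrightarrow> (\<exists>k. case dfam_conf M w k of (q, i, x) \<Rightarrow>
       i = length (tape w) \<and> q \<in> fam_Qa M \<and> x = 1)"

definition DFAM_langs :: "'a set \<Rightarrow> 'a list set set" where
  "DFAM_langs \<Sigma> = {L. \<exists>M. dfam_wf \<Sigma> M \<and>
      L = {w. set w \<subseteq> \<Sigma> \<and> dfam_accepts M w}}"

end

theory Submission
  imports Defs
begin


definition sim :: "'a rtdva1 \<Rightarrow> 'a set \<Rightarrow> 'a dfam" where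
 "sim M S = DFAM (insert 0 (Suc ` dva_Q M))
   (\<lambda>q \<sigma> b. case q of 0 \<Rightarrow> (Suc (dva_q0 M), Stay, dva_v M)
      | Suc p \<Rightarrow> (Suc (fst (dva_delta M p \<sigma> b)), Right, snd (dva_delta M p \<sigma> b)))
   0 (Suc ` dva_Qa M)
   (insert (dva_v M) ((\<lambda>(q,\<sigma>,b). snd (dva_delta M q \<sigma> b)) ` (dva_Q M \<times> tape_alph S \<times> UNIV)))"

lemma finite_tape_alph: "finite S \<Longrightarrow> finite (tape_alph S)"
  by (simp add: tape_alph_def)

lemma sim_wf: assumes "finite S" "rtdva1_wf S M" shows "dfam_wf S (sim M S)"
proof -
  have f: "finite (dva_Q M \<times> tape_alph S \<times> (UNIV::bool set))"
    using assms by (simp add: rtdva1_wf_def finite_tape_alph)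
  have "fst (dva_delta M q \<sigma> b) \<in> dva_Q M" if "q \<in> dva_Q M" "\<sigma> \<in> tape_alph S" for q \<sigma> b
    using assms(2) that by (auto simp: rtdva1_wf_def)
  moreover have "snd (dva_delta M q \<sigma> b) \<in> (\<lambda>(q,\<sigma>,b). snd (dva_delta M q \<sigma> b)) ` (dva_Q M \<times> tape_alph S \<times> (UNIV::bool set))"
    if "q \<in> dva_Q M" "\<sigma> \<in> tape_alph S" for q \<sigma> b
    using that by (intro image_eqI[of _ _ "(q,\<sigma>,b)"]) auto
  ultimately show ?thesis using assms f
    by (auto simp: dfam_wf_def sim_def rtdva1_wf_def split: nat.splits)
qed

lemma len_tape: "length (tape w) = length w + 2"
  by (simp add: tape_def)

lemma sim_run:
  assumes "j \<le> length (tape w)"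
  shows "(dfam_step (sim M S) (tape w) ^^ Suc j) (0,0,1) =
     (Suc (fst (foldl (rtdva1_step M) (dva_q0 M, dva_v M) (take j (tape w)))), j,
      snd (foldl (rtdva1_step M) (dva_q0 M, dva_v M) (take j (tape w))))"
  using assms
proof (induction j)
  case 0
  then show ?case by (simp add: dfam_step_def sim_def tape_def)
next
  case (Suc j)
  let ?t = "tape w"
  let ?c = "foldl (rtdva1_step M) (dva_q0 M, dva_v M) (take j ?t)"
  have j: "j < length ?t" using Suc.prems by simp
  have IH: "(dfam_step (sim M S) ?t ^^ Suc j) (0,0,1) = (Suc (fst ?c), j, snd ?c)" using Suc j by simp
  have tk: "take (Suc j) ?t = take j ?t @ [?t ! j]" using j by (rule take_Suc_conv_app_nth)
  have "(dfam_step (sim M S) ?t ^^ Suc (Suc j)) (0,0,1) = dfam_step (sim M S) ?t (Suc (fst ?c), j, snd ?c)"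
    using IH by simp
  also have "\<dots> = (Suc (fst (rtdva1_step M ?c (?t ! j))), Suc j, snd (rtdva1_step M ?c (?t ! j)))"
    using j by (simp add: dfam_step_def sim_def rtdva1_step_def split: prod.splits)
  finally show ?case by (simp add: tk)
qed

lemma step_end: "fst (snd c) \<ge> length t \<Longrightarrow> dfam_step M t c = c"
  by (cases c) (simp add: dfam_step_def)

lemma funpow_end: "fst (snd c) \<ge> length t \<Longrightarrow> (dfam_step M t ^^ n) c = c"
  by (induction n) (simp_all add: step_end)

lemma conf_add: "dfam_conf M w (a + b) = (dfam_step M (tape w) ^^ b) (dfam_conf M w a)"
  unfolding dfam_conf_def by (subst add.commute) (simp add: funpow_add)

lemma sim_accepts: "dfam_accepts (sim M S) w \<longleftrightarrow> rtdva1_accepts M w"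
proof -
  let ?L = "length (tape w)"
  let ?f = "rtdva1_final M w"
  have cL: "dfam_conf (sim M S) w (Suc ?L) = (Suc (fst ?f), ?L, snd ?f)"
    using sim_run[of ?L w M S] by (simp add: dfam_conf_def rtdva1_final_def sim_def)
  have qa: "fam_Qa (sim M S) = Suc ` dva_Qa M" by (simp add: sim_def)
  show ?thesis
  proof
    assume "dfam_accepts (sim M S) w"
    then obtain k where k: "case dfam_conf (sim M S) w k of (q, i, x) \<Rightarrow>
       i = ?L \<and> q \<in> fam_Qa (sim M S) \<and> x = 1" unfolding dfam_accepts_def by (rule exE)
    have "k \<ge> Suc ?L"
    proof (rule ccontr)
      assume "\<not> ?thesis"
      then have "k \<le> ?L" by simp
      show False
      proof (cases k)
        case 0 then show False using k by (simp add: dfam_conf_def len_tape sim_def)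
      next
        case (Suc j)
        then have "j < ?L" using \<open>k \<le> ?L\<close> by simp
        then show False using k Suc sim_run[of j w M S] by (simp add: dfam_conf_def sim_def)
      qed
    qed
    then obtain d where "k = Suc ?L + d" using le_Suc_ex by blast
    then have "dfam_conf (sim M S) w k = dfam_conf (sim M S) w (Suc ?L)"
      using conf_add funpow_end cL by (metis fst_conv le_refl snd_conv)
    then show "rtdva1_accepts M w" using k cL qa by (auto simp: rtdva1_accepts_def)
  next
    assume "rtdva1_accepts M w"
    then show "dfam_accepts (sim M S) w" unfolding dfam_accepts_def
      using cL qa by (intro exI[of _ "Suc ?L"]) (auto simp: rtdva1_accepts_def)
  qed
qed

lemma part1: "finite S \<Longrightarrow> rtDVA1_langs S \<subseteq> DFAM_langs S"
  unfolding rtDVA1_langs_def DFAM_langs_def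
  using sim_wf sim_accepts by blast



definition d2 :: "nat \<Rightarrow> nat tsym \<Rightarrow> bool \<Rightarrow> nat \<times> move \<times> rat" where
 "d2 q \<sigma> b = (if q = 0 then (1, Right, 1)
   else if q \<in> {1,2,3} then (case \<sigma> of Dollar \<Rightarrow> (if b then (4, Right, 1) else (3, Stay, 1/2))
        | Sym c \<Rightarrow> (if q = 3 then (5, Right, 1) else if c = 0 then (if q = 1 then (1, Right, 2) else (5, Right, 1)) else (2, Right, 1/2))
        | Cent \<Rightarrow> (5, Right, 1))
   else (5, Right, 1))"

definition M2 :: "nat dfam" where "M2 = DFAM {0..5} d2 0 {4} {1, 2, 1/2}"

definition L2 :: "nat list set" where
  "L2 = {w. set w \<subseteq> {0,1} \<and> (\<exists>a b. w = replicate a 0 @ replicate b 1 \<and> b \<le> a)}"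

lemma M2_wf: "dfam_wf {0,1} M2"
  by (auto simp: dfam_wf_def M2_def d2_def split: tsym.splits)

lemma step_M2: "i < length t \<Longrightarrow> dfam_step M2 t (q, i, x) =
   (case d2 q (t ! i) (x = 1) of (q', d, g) \<Rightarrow> (q', if d = Right then Suc i else i, x * g))"
  by (simp add: dfam_step_def M2_def)

lemma L_a: "(\<forall>j<n. i + j < length t \<and> t ! (i+j) = Sym 0) \<Longrightarrow>
   (dfam_step M2 t ^^ n) (1, i, x) = (1, i+n, x * 2^n)"
proof (induction n arbitrary: i x)
  case 0 then show ?case by simp
next
  case (Suc n)
  have h0: "i < length t" "t ! i = Sym 0" using Suc.prems[rule_format, of 0] by auto
  have s: "dfam_step M2 t (1, i, x) = (1, Suc i, x * 2)" using h0 by (simp add: step_M2 d2_def)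
  have "\<forall>j<n. Suc i + j < length t \<and> t ! (Suc i + j) = Sym 0"
    using Suc.prems by (metis Suc_less_eq add_Suc_right add_Suc)
  then show ?case unfolding funpow_Suc_right o_apply s using Suc.IH by (simp add: mult.assoc)
qed

lemma L_b: "q \<in> {1,2} \<Longrightarrow> (\<forall>j<m. i + j < length t \<and> t ! (i+j) = Sym 1) \<Longrightarrow>
   (dfam_step M2 t ^^ m) (q, i, x) = (if m = 0 then q else 2, i+m, x / 2^m)"
proof (induction m arbitrary: q i x)
  case 0 then show ?case by simp
next
  case (Suc m)
  have h0: "i < length t" "t ! i = Sym 1" using Suc.prems(2)[rule_format, of 0] by auto
  have s: "dfam_step M2 t (q, i, x) = (2, Suc i, x * (1/2))" using h0 Suc.prems(1) by (auto simp: step_M2 d2_def)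
  have "\<forall>j<m. Suc i + j < length t \<and> t ! (Suc i + j) = Sym 1"
    using Suc.prems by (metis Suc_less_eq add_Suc_right add_Suc)
  then show ?case unfolding funpow_Suc_right o_apply s using Suc.IH[of 2 "Suc i" "x * (1/2)"] by simp
qed

lemma L_d: "q \<in> {1,2,3} \<Longrightarrow> p < length t \<Longrightarrow> t ! p = Dollar \<Longrightarrow>
   (dfam_step M2 t ^^ j) (q, p, 2^j) = (if j = 0 then q else 3, p, 1)"
proof (induction j arbitrary: q)
  case 0 then show ?case by simp
next
  case (Suc j)
  have ne: "(2::rat) ^ Suc j \<noteq> 1" using one_less_power[of "2::rat" "Suc j"] by linarith
  have s: "dfam_step M2 t (q, p, 2 ^ Suc j) = (3, p, 2^j)" using Suc.prems ne by (auto simp: step_M2 d2_def)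
  show ?case unfolding funpow_Suc_right o_apply s using Suc.IH[of 3] Suc.prems by simp
qed

lemma L_r: "q \<in> {1,2,3} \<Longrightarrow> p < length t \<Longrightarrow> t ! p = Dollar \<Longrightarrow> j > 0 \<Longrightarrow>
   (dfam_step M2 t ^^ k) (q, p, 1/2^j) = (if k = 0 then q else 3, p, 1/2^(j+k))"
proof (induction k arbitrary: q j)
  case 0 then show ?case by simp
next
  case (Suc k)
  have "(1::rat) < 2^j" using Suc.prems(4) one_less_power[of "2::rat" j] by simp
  then have ne: "(1::rat)/2^j \<noteq> 1" by (metis div_by_1 divide_cancel_left less_irrefl one_neq_zero)
  have s: "dfam_step M2 t (q, p, 1/2^j) = (3, p, 1/2^(Suc j))" using Suc.prems ne by (auto simp: step_M2 d2_def)
  show ?case unfolding funpow_Suc_right o_apply s using Suc.IH[of 3 "Suc j"] Suc.prems by simp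
qed

lemma L_dead: "fst ((dfam_step M2 t ^^ k) (5, i, x)) = 5"
proof (induction k arbitrary: i x)
  case 0 then show ?case by simp
next
  case (Suc k)
  have "\<exists>i' x'. dfam_step M2 t (5, i, x) = (5, i', x')"
    by (auto simp: dfam_step_def M2_def d2_def)
  then show ?case unfolding funpow_Suc_right o_apply using Suc.IH by metis
qed

lemma pos_step: "fst (snd (dfam_step M t c)) \<le> Suc (fst (snd c))"
  by (cases c) (auto simp: dfam_step_def split: prod.splits)

lemma pos_bound: "fst (snd (dfam_conf M w k)) \<le> k"
proof (induction k)
  case 0 then show ?case by (simp add: dfam_conf_def)
next
  case (Suc k)
  have "dfam_conf M w (Suc k) = dfam_step M (tape w) (dfam_conf M w k)"
    by (simp add: dfam_conf_def)
  then show ?case using pos_step[of M "tape w" "dfam_conf M w k"] Suc by simp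
qed

lemma conf1: "dfam_conf M2 w 1 = (1, 1, 1)"
  by (simp add: dfam_conf_def dfam_step_def M2_def d2_def tape_def)

lemma tape_nth: "i < length w \<Longrightarrow> tape w ! Suc i = Sym (w ! i)"
  by (simp add: tape_def nth_append)

lemma tape_last: "tape w ! Suc (length w) = Dollar"
  by (simp add: tape_def nth_append)

lemma prefix_run:
  assumes w: "w = replicate n 0 @ replicate m 1 @ rest"
  shows "dfam_conf M2 w (1 + n + m) = (if m = 0 then 1 else 2, 1 + n + m, 2^n / 2^m)"
proof -
  have a: "\<forall>j<n. 1 + j < length (tape w) \<and> tape w ! (1+j) = Sym 0"
    using w by (auto simp: len_tape tape_nth nth_append)
  have b: "\<forall>j<m. (1+n) + j < length (tape w) \<and> tape w ! ((1+n)+j) = Sym 1"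
  proof (intro allI impI)
    fix j assume "j < m"
    then have "n + j < length w" "w ! (n+j) = 1" using w by (auto simp: nth_append)
    then show "(1+n) + j < length (tape w) \<and> tape w ! ((1+n)+j) = Sym 1"
      by (simp add: len_tape tape_nth)
  qed
  have "dfam_conf M2 w (1 + n) = (1, 1 + n, 2^n)"
    using conf_add[of M2 w 1 n] conf1 L_a[OF a] by simp
  then show ?thesis
    using conf_add[of M2 w "1+n" m] L_b[OF _ b, of 1 "2^n"] by simp
qed



lemma decomp: "set w \<subseteq> {0::nat,1} \<Longrightarrow> (\<exists>n m. w = replicate n 0 @ replicate m 1) \<or>
   (\<exists>n m rest. w = replicate n 0 @ replicate (Suc m) 1 @ 0 # rest)"
proof (induction w)
  case Nil then show ?case by (intro disjI1 exI[of _ 0]) simp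
next
  case (Cons x w)
  then have IH: "(\<exists>n m. w = replicate n 0 @ replicate m 1) \<or>
   (\<exists>n m rest. w = replicate n 0 @ replicate (Suc m) 1 @ 0 # rest)" and x: "x = 0 \<or> x = 1" by auto
  show ?case
  proof (cases "x = 0")
    case True
    from IH show ?thesis
    proof
      assume "\<exists>n m. w = replicate n 0 @ replicate m 1"
      then obtain n m where "w = replicate n 0 @ replicate m 1" by blast
      then show ?thesis using True by (intro disjI1 exI[of _ "Suc n"] exI[of _ m]) simp
    next
      assume "\<exists>n m rest. w = replicate n 0 @ replicate (Suc m) 1 @ 0 # rest"
      then obtain n m rest where "w = replicate n 0 @ replicate (Suc m) 1 @ 0 # rest" by blast
      then show ?thesis using True by (intro disjI2 exI[of _ "Suc n"] exI[of _ m] exI[of _ rest]) simp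
    qed
  next
    case False
    then have x1: "x = 1" using x by simp
    from IH show ?thesis
    proof
      assume "\<exists>n m. w = replicate n 0 @ replicate m 1"
      then obtain n m where w: "w = replicate n 0 @ replicate m 1" by blast
      show ?thesis
      proof (cases n)
        case 0 then show ?thesis using w x1 by (intro disjI1 exI[of _ 0] exI[of _ "Suc m"]) simp
      next
        case (Suc n') then show ?thesis using w x1
          by (intro disjI2 exI[of _ 0] exI[of _ 0] exI[of _ "replicate n' 0 @ replicate m 1"]) simp
      qed
    next
      assume "\<exists>n m rest. w = replicate n 0 @ replicate (Suc m) 1 @ 0 # rest"
      then obtain n m rest where w: "w = replicate n 0 @ replicate (Suc m) 1 @ 0 # rest" by blast
      show ?thesis
      proof (cases n)
        case 0 then show ?thesis using w x1
          by (intro disjI2 exI[of _ 0] exI[of _ "Suc m"] exI[of _ rest]) simp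
      next
        case (Suc n') then show ?thesis using w x1
          by (intro disjI2 exI[of _ 0] exI[of _ 0] exI[of _ "replicate n' 0 @ replicate (Suc m) 1 @ 0 # rest"]) simp
      qed
    qed
  qed
qed

lemma rep_inj: "replicate n 0 @ replicate m 1 = replicate a (0::nat) @ replicate b 1 \<Longrightarrow> n = a \<and> m = b"
proof -
  assume h: "replicate n 0 @ replicate m 1 = replicate a (0::nat) @ replicate b 1"
  have "length (filter (\<lambda>x. x = 0) (replicate n 0 @ replicate m (1::nat))) = n" by simp
  moreover have "length (filter (\<lambda>x. x = 1) (replicate n 0 @ replicate m (1::nat))) = m" by simp
  moreover have "length (filter (\<lambda>x. x = 0) (replicate a 0 @ replicate b (1::nat))) = a" by simp
  moreover have "length (filter (\<lambda>x. x = 1) (replicate a 0 @ replicate b (1::nat))) = b" by simp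
  moreover note arg_cong[OF h, of "\<lambda>l. length (filter (\<lambda>x. x = 0) l)"]
  moreover note arg_cong[OF h, of "\<lambda>l. length (filter (\<lambda>x. x = 1) l)"]
  ultimately show ?thesis by simp
qed

lemma not_sorted: "replicate n 0 @ replicate (Suc m) 1 @ 0 # rest \<noteq> replicate a (0::nat) @ replicate b 1"
proof
  assume h: "replicate n 0 @ replicate (Suc m) 1 @ 0 # rest = replicate a (0::nat) @ replicate b 1"
  have "sorted (replicate a (0::nat) @ replicate b 1)" by (simp add: sorted_append)
  moreover have "\<not> sorted (replicate n 0 @ replicate (Suc m) (1::nat) @ 0 # rest)"
    by (simp add: sorted_append)
  ultimately show False using h by simp
qed

lemma L2_mem: "replicate n 0 @ replicate m 1 \<in> L2 \<longleftrightarrow> m \<le> n"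
proof
  assume "replicate n 0 @ replicate m 1 \<in> L2"
  then obtain a b where "replicate n 0 @ replicate m 1 = replicate a (0::nat) @ replicate b 1" "b \<le> a"
    unfolding L2_def by blast
  then show "m \<le> n" using rep_inj by blast
next
  assume "m \<le> n" then show "replicate n 0 @ replicate m 1 \<in> L2" unfolding L2_def by auto
qed

lemma accepts_nm: "dfam_accepts M2 (replicate n 0 @ replicate m 1) \<longleftrightarrow> m \<le> n"
proof -
  let ?w = "replicate n 0 @ replicate m (1::nat)"
  let ?p = "1 + n + m"
  have c: "dfam_conf M2 ?w ?p = (if m = 0 then 1 else 2, ?p, 2^n / 2^m)"
    using prefix_run[of ?w n m "[]"] by simp
  have lt: "length (tape ?w) = Suc ?p" by (simp add: len_tape)
  have pl: "?p < length (tape ?w)" using lt by simp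
  have dol: "tape ?w ! ?p = Dollar" using tape_last[of ?w] by simp
  have qa: "fam_Qa M2 = {4}" by (simp add: M2_def)
  show ?thesis
  proof
    assume acc: "dfam_accepts M2 ?w"
    show "m \<le> n"
    proof (rule ccontr)
      assume "\<not> m \<le> n"
      then have mn: "n < m" by simp
      then have v: "(2::rat)^n / 2^m = 1 / 2^(m - n)"
        by (simp add: power_diff)
      have r: "dfam_conf M2 ?w (?p + k) = (if k = 0 then (if m = 0 then 1 else 2) else 3, ?p, 1/2^(m-n+k))" for k
        using conf_add[of M2 ?w ?p k] c v L_r[OF _ pl dol, of "if m = 0 then 1 else 2" "m - n" k] mn by simp
      from acc obtain k where k: "case dfam_conf M2 ?w k of (q, i, x) \<Rightarrow> i = length (tape ?w) \<and> q \<in> fam_Qa M2 \<and> x = 1"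
        unfolding dfam_accepts_def by (rule exE)
      show False
      proof (cases "k \<le> ?p")
        case True
        then show False using k pos_bound[of M2 ?w k] lt by (auto split: prod.splits)
      next
        case False
        then obtain d where "k = ?p + d" using le_Suc_ex[of ?p k] by fastforce
        then show False using k r[of d] lt by simp
      qed
    qed
  next
    assume mn: "m \<le> n"
    then have v: "(2::rat)^n / 2^m = 2^(n - m)"
      by (simp add: power_diff)
    let ?q = "if m = 0 then 1 else 2::nat"
    have r: "dfam_conf M2 ?w (?p + (n-m)) = (if n - m = 0 then ?q else 3, ?p, 1)"
      using conf_add[of M2 ?w ?p "n - m"] c v L_d[OF _ pl dol, of ?q "n - m"] by simp
    have "dfam_conf M2 ?w (?p + (n-m) + 1) = (4, Suc ?p, 1)"
      using conf_add[of M2 ?w "?p + (n-m)" 1] r pl dol by (simp add: step_M2 d2_def)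
    then show "dfam_accepts M2 ?w" unfolding dfam_accepts_def using lt qa
      by (intro exI[of _ "?p + (n-m) + 1"]) simp
  qed
qed

lemma rejects_dead: "\<not> dfam_accepts M2 (replicate n 0 @ replicate (Suc m) 1 @ 0 # rest)"
proof
  let ?w = "replicate n 0 @ replicate (Suc m) 1 @ 0 # (rest::nat list)"
  let ?p = "1 + n + Suc m"
  assume acc: "dfam_accepts M2 ?w"
  have c: "dfam_conf M2 ?w ?p = (2, ?p, 2^n / 2^Suc m)"
    using prefix_run[of ?w n "Suc m" "0 # rest"] by simp
  have lt: "length (tape ?w) = ?p + 2 + length rest" by (simp add: len_tape)
  have s0: "tape ?w ! ?p = Sym 0"
    using tape_nth[of "n + Suc m" ?w] by (simp add: nth_append)
  have c1: "dfam_conf M2 ?w (Suc ?p) = (5, Suc ?p, 2^n / 2^Suc m)"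
    using conf_add[of M2 ?w ?p 1] c s0 lt by (simp add: step_M2 d2_def)
  have qa: "fam_Qa M2 = {4}" by (simp add: M2_def)
  from acc obtain k where k: "case dfam_conf M2 ?w k of (q, i, x) \<Rightarrow> i = length (tape ?w) \<and> q \<in> fam_Qa M2 \<and> x = 1"
    unfolding dfam_accepts_def by (rule exE)
  show False
  proof (cases "k \<le> Suc ?p")
    case True
    then show False using k pos_bound[of M2 ?w k] lt by (auto split: prod.splits)
  next
    case False
    then obtain d where d: "k = Suc ?p + d" using le_Suc_ex[of "Suc ?p" k] by fastforce
    have "fst (dfam_conf M2 ?w k) = 5"
      using d conf_add[of M2 ?w "Suc ?p" d] c1 L_dead by simp
    then show False using k qa by (auto split: prod.splits)
  qed
qed

lemma L2_DFAM: "L2 \<in> DFAM_langs {0,1}"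
proof -
  have "L2 = {w. set w \<subseteq> {0,1} \<and> dfam_accepts M2 w}"
  proof (intro set_eqI iffI)
    fix w assume w: "w \<in> L2"
    then obtain a b where "w = replicate a 0 @ replicate b 1" "b \<le> a" unfolding L2_def by blast
    then show "w \<in> {w. set w \<subseteq> {0,1} \<and> dfam_accepts M2 w}" using w accepts_nm unfolding L2_def by auto
  next
    fix w assume w: "w \<in> {w. set w \<subseteq> {0,1} \<and> dfam_accepts M2 w}"
    then have s: "set w \<subseteq> {0,1}" and acc: "dfam_accepts M2 w" by auto
    from decomp[OF s] show "w \<in> L2"
    proof
      assume "\<exists>n m. w = replicate n 0 @ replicate m 1"
      then obtain n m where "w = replicate n 0 @ replicate m 1" by blast
      then show ?thesis using acc accepts_nm L2_mem by auto
    next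
      assume "\<exists>n m rest. w = replicate n 0 @ replicate (Suc m) 1 @ 0 # rest"
      then show ?thesis using acc rejects_dead by auto
    qed
  qed
  then show ?thesis unfolding DFAM_langs_def using M2_wf by blast
qed



definition runw :: "'a rtdva1 \<Rightarrow> 'a list \<Rightarrow> nat \<times> rat \<Rightarrow> nat \<times> rat" where
  "runw M u c = foldl (rtdva1_step M) c (map Sym u)"

definition accc :: "'a rtdva1 \<Rightarrow> nat \<times> rat \<Rightarrow> bool" where
  "accc M c \<longleftrightarrow> fst (rtdva1_step M c Dollar) \<in> dva_Qa M \<and> snd (rtdva1_step M c Dollar) = 1"

lemma accepts_run: "rtdva1_accepts M w \<longleftrightarrow> accc M (runw M w (rtdva1_step M (dva_q0 M, dva_v M) Cent))"
  by (simp add: rtdva1_accepts_def rtdva1_final_def tape_def runw_def accc_def)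

lemma runw_append: "runw M (u @ v) c = runw M v (runw M u c)"
  by (simp add: runw_def)

fun bb :: "'a rtdva1 \<Rightarrow> nat \<Rightarrow> 'a \<Rightarrow> nat \<Rightarrow> nat \<times> rat" where
  "bb M p a 0 = (p, 1)"
| "bb M p a (Suc t) = (fst (dva_delta M (fst (bb M p a t)) (Sym a) False),
      snd (bb M p a t) * snd (dva_delta M (fst (bb M p a t)) (Sym a) False))"

lemma blind: "(\<forall>t'<t. x * snd (bb M p a t') \<noteq> 1) \<Longrightarrow>
   runw M (replicate t a) (p, x) = (fst (bb M p a t), x * snd (bb M p a t))"
proof (induction t)
  case 0 then show ?case by (simp add: runw_def)
next
  case (Suc t)
  have IH: "runw M (replicate t a) (p, x) = (fst (bb M p a t), x * snd (bb M p a t))"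
    using Suc by simp
  have ne: "x * snd (bb M p a t) \<noteq> 1" using Suc.prems by simp
  have "replicate (Suc t) a = replicate t a @ [a]" by (simp add: replicate_append_same)
  then have "runw M (replicate (Suc t) a) (p, x) = rtdva1_step M (runw M (replicate t a) (p, x)) (Sym a)"
    by (simp add: runw_append) (simp add: runw_def)
  also have "\<dots> = (fst (bb M p a (Suc t)), x * snd (bb M p a (Suc t)))"
    using IH ne by (simp add: rtdva1_step_def split: prod.splits)
  finally show ?case .
qed

lemma step_Q: "rtdva1_wf S M \<Longrightarrow> fst c \<in> dva_Q M \<Longrightarrow> \<sigma> \<in> tape_alph S \<Longrightarrow>
   fst (rtdva1_step M c \<sigma>) \<in> dva_Q M"
  unfolding rtdva1_step_def rtdva1_wf_def
  by (cases "dva_delta M (fst c) \<sigma> (snd c = 1)") (metis case_prod_conv fst_conv)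

lemma runw_Q: "rtdva1_wf S M \<Longrightarrow> set u \<subseteq> S \<Longrightarrow> fst c \<in> dva_Q M \<Longrightarrow> fst (runw M u c) \<in> dva_Q M"
proof (induction u arbitrary: c)
  case Nil then show ?case by (simp add: runw_def)
next
  case (Cons a u)
  have "fst (rtdva1_step M c (Sym a)) \<in> dva_Q M"
    using Cons.prems by (intro step_Q[of S]) (auto simp: tape_alph_def)
  then show ?case using Cons.IH[of "rtdva1_step M c (Sym a)"] Cons.prems by (simp add: runw_def)
qed

lemma bb_Q: "rtdva1_wf S M \<Longrightarrow> p \<in> dva_Q M \<Longrightarrow> a \<in> S \<Longrightarrow> fst (bb M p a t) \<in> dva_Q M"
  by (induction t) (auto simp: rtdva1_wf_def tape_alph_def)

lemma bb_period: assumes "fst (bb M p a (T + r)) = fst (bb M p a T)" "T \<le> t"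
  shows "fst (bb M p a (t + r)) = fst (bb M p a t)"
proof -
  have "fst (bb M p a (T + d + r)) = fst (bb M p a (T + d))" for d
    by (induction d) (use assms(1) in \<open>simp_all\<close>)
  then show ?thesis using assms(2) by (metis le_add_diff_inverse)
qed

lemma bb_ident: assumes "fst (bb M p a (T + r)) = fst (bb M p a T)" "T \<le> t"
  shows "snd (bb M p a (t + r)) * snd (bb M p a T) = snd (bb M p a t) * snd (bb M p a (T + r))"
proof -
  have "snd (bb M p a (T + d + r)) * snd (bb M p a T) = snd (bb M p a (T + d)) * snd (bb M p a (T + r))" for d
  proof (induction d)
    case 0 then show ?case by (simp add: mult.commute)
  next
    case (Suc d)
    have per: "fst (bb M p a (T + d + r)) = fst (bb M p a (T + d))"
      using bb_period[OF assms(1), of "T + d"] by simp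
    have "snd (bb M p a (T + Suc d + r)) * snd (bb M p a T) =
      (snd (bb M p a (T + d + r)) * snd (bb M p a T)) * snd (dva_delta M (fst (bb M p a (T + d))) (Sym a) False)"
      using per by (simp add: ac_simps)
    also have "\<dots> = snd (bb M p a (T + Suc d)) * snd (bb M p a (T + r))"
      using Suc by (simp add: ac_simps)
    finally show ?case .
  qed
  then show ?thesis using assms(2) by (metis le_add_diff_inverse)
qed



lemma accc_ne: "z \<noteq> 1 \<Longrightarrow> accc M (q, z) \<longleftrightarrow>
   fst (dva_delta M q Dollar False) \<in> dva_Qa M \<and> z * snd (dva_delta M q Dollar False) = 1"
  by (simp add: accc_def rtdva1_step_def split: prod.splits)

lemma subsingleton_finite: "(\<And>a b. a \<in> S \<Longrightarrow> b \<in> S \<Longrightarrow> a = b) \<Longrightarrow> finite S"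
proof (cases "S = {}")
  case False
  then obtain a where "a \<in> S" by blast
  moreover assume "\<And>a b. a \<in> S \<Longrightarrow> b \<in> S \<Longrightarrow> a = b"
  ultimately have "S \<subseteq> {a}" by blast
  then show ?thesis using finite_subset by blast
qed simp

lemma L2_not: "L2 \<notin> rtDVA1_langs {0,1}"
proof
  assume "L2 \<in> rtDVA1_langs {0,1}"
  then obtain M where wf: "rtdva1_wf {0,1} M" and LM: "L2 = {w. set w \<subseteq> {0,1} \<and> rtdva1_accepts M w}"
    unfolding rtDVA1_langs_def by blast
  define c0 where "c0 = rtdva1_step M (dva_q0 M, dva_v M) Cent"
  define A where "A n = runw M (replicate n 0) c0" for n
  have memb: "accc M (runw M (replicate m 1) (A n)) \<longleftrightarrow> m \<le> n" for n m
  proof -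
    have "set (replicate n 0 @ replicate m (1::nat)) \<subseteq> {0,1}" by auto
    then have "m \<le> n \<longleftrightarrow> rtdva1_accepts M (replicate n 0 @ replicate m 1)"
      using L2_mem[of n m] LM by blast
    then show ?thesis by (simp add: accepts_run runw_append A_def c0_def)
  qed
  have Ainj: "inj A"
  proof (rule injI)
    fix n n' assume h: "A n = A n'"
    show "n = n'"
    proof (rule ccontr)
      assume "n \<noteq> n'"
      then have "n < n' \<or> n' < n" by arith
      then show False using memb[of n' n'] memb[of n' n] memb[of n n] memb[of n n'] h by auto
    qed
  qed
  have c0Q: "fst c0 \<in> dva_Q M"
    using wf unfolding c0_def by (intro step_Q[of "{0,1}"]) (auto simp: rtdva1_wf_def tape_alph_def)
  have AQ: "fst (A n) \<in> dva_Q M" for n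
  proof -
    have "set (replicate n (0::nat)) \<subseteq> {0,1}" by (simp add: set_replicate_conv_if)
    then show ?thesis unfolding A_def using runw_Q[OF wf _ c0Q] by blast
  qed
  have finQ: "finite (dva_Q M)" using wf by (simp add: rtdva1_wf_def)
  have "finite ((fst \<circ> A) ` UNIV)" using AQ finQ by (metis finite_subset image_subsetI o_apply)
  then obtain p where "infinite ((fst \<circ> A) -` {p})"
    using inf_img_fin_dom[of "fst \<circ> A" UNIV] by auto
  define I where "I = {n. fst (A n) = p}"
  have infI: "infinite I" using \<open>infinite ((fst \<circ> A) -` {p})\<close> unfolding I_def by (simp add: vimage_def)
  define x where "x n = snd (A n)" for n
  have An: "A n = (p, x n)" if "n \<in> I" for n using that unfolding I_def x_def by (metis prod.collapse mem_Collect_eq)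
  have xinj: "inj_on x I"
    by (rule inj_onI) (metis An Ainj injD)
  obtain n1 where "n1 \<in> I" using infI by (metis finite.emptyI ex_in_conv)
  then have pQ: "p \<in> dva_Q M" using AQ unfolding I_def by auto
  define bs where "bs t = fst (bb M p 1 t)" for t
  define Y where "Y t = snd (bb M p 1 t)" for t
  have bsQ: "bs t \<in> dva_Q M" for t unfolding bs_def using bb_Q[OF wf pQ] by simp
  have "\<not> inj bs"
  proof
    assume "inj bs"
    moreover have "finite (range bs)" using bsQ finQ by (metis finite_subset image_subsetI)
    ultimately have "finite (UNIV :: nat set)" using finite_imageD by blast
    then show False by simp
  qed
  then obtain t1 t2 where t12: "bs t1 = bs t2" "t1 < t2"
    unfolding inj_def by (metis linorder_neqE_nat)
  define T where "T = t1"
  define r where "r = t2 - t1"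
  have r0: "r > 0" using t12 unfolding r_def by simp
  have Tr: "fst (bb M p 1 (T + r)) = fst (bb M p 1 T)" using t12 unfolding T_def r_def bs_def by simp
  have per: "bs (t + r) = bs t" if "T \<le> t" for t using bb_period[OF Tr that] unfolding bs_def .
  have ident: "Y (t + r) * Y T = Y t * Y (T + r)" if "T \<le> t" for t using bb_ident[OF Tr that] unfolding Y_def .
  have F: "accc M (bs m, x n * Y m) \<longleftrightarrow> m \<le> n" if "n \<in> I" "\<forall>t'<m. x n * Y t' \<noteq> 1" for n m
  proof -
    have "runw M (replicate m 1) (A n) = (bs m, x n * Y m)"
      using blind[of m "x n" M p 1] that unfolding An[OF that(1)] bs_def Y_def by simp
    then show ?thesis using memb[of m n] by simp
  qed
  define K where "K = T + r + 1"
  define I' where "I' = {n \<in> I. K \<le> n \<and> (\<forall>t<K. x n * Y t \<noteq> 1)}"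
  have "I - I' \<subseteq> {..<K} \<union> (\<Union>t<K. {n \<in> I. x n * Y t = 1})"
    unfolding I'_def by auto
  moreover have "finite {n \<in> I. x n * Y t = 1}" for t
  proof (rule subsingleton_finite)
    fix a b assume "a \<in> {n \<in> I. x n * Y t = 1}" "b \<in> {n \<in> I. x n * Y t = 1}"
    then have "a \<in> I" "b \<in> I" "x a * Y t = 1" "x b * Y t = 1" by auto
    then have "x a = x b" by (metis mult_right_cancel mult_zero_right zero_neq_one)
    then show "a = b" using xinj \<open>a \<in> I\<close> \<open>b \<in> I\<close> by (meson inj_onD)
  qed
  ultimately have "finite (I - I')" by (meson finite_UN_I finite_Un finite_lessThan finite_subset)
  then have infI': "infinite I'"
    using infI by (metis Diff_Diff_Int Diff_infinite_finite I'_def inf.absorb_iff2 mem_Collect_eq subsetI)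
  obtain n0 where n0: "n0 \<in> I'" using infI' by (metis finite.emptyI ex_in_conv)
  then have n0I: "n0 \<in> I" and n0K: "K \<le> n0" and n0b: "\<forall>t<K. x n0 * Y t \<noteq> 1" unfolding I'_def by auto
  let ?d = "snd (dva_delta M (bs T) Dollar False)"
  have a1: "accc M (bs T, x n0 * Y T)" using F[OF n0I, of T] n0b n0K unfolding K_def by auto
  have a2: "accc M (bs T, x n0 * Y (T + r))" using per[of T] F[OF n0I, of "T + r"] n0b n0K unfolding K_def by auto
  have ne1: "x n0 * Y T \<noteq> 1" using n0b unfolding K_def by auto
  have ne2: "x n0 * Y (T + r) \<noteq> 1" using n0b unfolding K_def by auto
  have e1: "x n0 * Y T * ?d = 1" using a1 accc_ne[OF ne1] by blast
  have e2: "x n0 * Y (T + r) * ?d = 1" using a2 accc_ne[OF ne2] per[of T] by auto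
  have YT: "Y (T + r) = Y T"
  proof -
    have "(x n0 * ?d) * Y T = (x n0 * ?d) * Y (T + r)" using e1 e2 by (simp add: ac_simps)
    moreover have "x n0 * ?d \<noteq> 0" using e1 by (metis mult_zero_left mult.commute mult.left_commute zero_neq_one)
    ultimately show ?thesis by simp
  qed
  have YT0: "Y T \<noteq> 0" using e1 by auto
  have Yper: "Y (t + r) = Y t" if "T \<le> t" for t
    using ident[OF that] YT YT0 by simp
  have Yperk: "Y (t + k * r) = Y t" if "T \<le> t" for t k
  proof (induction k)
    case (Suc k)
    have "Y (t + Suc k * r) = Y ((t + k * r) + r)" by (simp add: algebra_simps)
    also have "\<dots> = Y (t + k * r)" using Yper[of "t + k * r"] that by simp
    finally show ?case using Suc by simp
  qed simp
  have Ymod: "Y t = Y (T + (t - T) mod r)" if "T \<le> t" for t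
  proof -
    have "t = (T + (t - T) mod r) + ((t - T) div r) * r" using that by simp
    then show ?thesis using Yperk[of "T + (t - T) mod r" "(t - T) div r"] by simp
  qed
  have hit: "\<exists>h\<ge>T. x n * Y h = 1" if "n \<in> I'" for n
  proof (rule ccontr)
    assume nh: "\<not> ?thesis"
    from that have nI: "n \<in> I" and nK: "K \<le> n" and nb: "\<forall>t<K. x n * Y t \<noteq> 1" unfolding I'_def by auto
    have all: "x n * Y t \<noteq> 1" for t
    proof (cases "t < K")
      case True then show ?thesis using nb by simp
    next
      case False then show ?thesis using nh unfolding K_def by auto
    qed
    define m' where "m' = n + 1 - r"
    have m'T: "T \<le> m'" and m'n: "m' \<le> n" and m'r: "m' + r = n + 1"
      using nK r0 unfolding m'_def K_def by auto
    have "accc M (bs m', x n * Y m')" using F[OF nI, of m'] all m'n by simp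
    moreover have "\<not> accc M (bs (n + 1), x n * Y (n + 1))" using F[OF nI, of "n+1"] all by simp
    ultimately show False using per[OF m'T] Yper[OF m'T] m'r by metis
  qed
  define S where "S = (\<lambda>j. 1 / Y (T + j)) ` {..<r}"
  have "x ` I' \<subseteq> S"
  proof
    fix z assume "z \<in> x ` I'"
    then obtain n where n: "n \<in> I'" "z = x n" by blast
    obtain h where h: "T \<le> h" "x n * Y h = 1" using hit[OF n(1)] by blast
    have "Y h = Y (T + (h - T) mod r)" using Ymod[OF h(1)] .
    moreover have "(h - T) mod r < r" using r0 by simp
    moreover have "Y h \<noteq> 0" using h(2) by auto
    moreover have "z = 1 / Y h" using h(2) n(2) \<open>Y h \<noteq> 0\<close> by (simp add: eq_divide_eq)
    ultimately show "z \<in> S" unfolding S_def by auto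
  qed
  then have "finite (x ` I')" unfolding S_def by (meson finite_imageI finite_lessThan finite_subset)
  moreover have "inj_on x I'" using xinj unfolding I'_def by (rule inj_on_subset) auto
  ultimately have "finite I'" using finite_imageD by blast
  then show False using infI' by simp
qed


theorem theorem7:
  shows "(\<forall>\<Sigma> :: 'a set. finite \<Sigma> \<longrightarrow> rtDVA1_langs \<Sigma> \<subseteq> DFAM_langs \<Sigma>) \<and>
         (\<exists>(\<Sigma> :: nat set) L. finite \<Sigma> \<and> L \<in> DFAM_langs \<Sigma> \<and> L \<notin> rtDVA1_langs \<Sigma>)"
proof (intro conjI allI impI)
  fix S :: "'a set" assume "finite S" then show "rtDVA1_langs S \<subseteq> DFAM_langs S" by (rule part1)
next
  show "\<exists>(S :: nat set) L. finite S \<and> L \<in> DFAM_langs S \<and> L \<notin> rtDVA1_langs S"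
    using L2_DFAM L2_not by (intro exI[of _ "{0,1}"] exI[of _ L2]) simp
qed

end
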